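(* Let $p,q\geq1$ be integers and let $(\vartheta(s),\alpha(s))$ be a trajectory of the differential system $$\dot\vartheta=3\sin\vartheta\cos\vartheta\sin(\alpha-\vartheta),\qquad \dot\alpha=q\cos\alpha\cos\vartheta-p\sin\alpha\sin\vartheta.$$ Suppose that for some $s_0$ one has $0<\vartheta(s_0)<\pi/2$ and $\vartheta(s_0)-\pi/2\leq\alpha(s_0)\leq\vartheta(s_0)+\pi/2$, i.e. the trajectory is in $R_1=\{(\vartheta,\alpha):0\leq\vartheta\leq\pi/2,\ \vartheta-\pi/2\leq\alpha\leq\vartheta+\pi/2\}$. Then the trajectory remains in $R_1$ for all $s\geq s_0$. *)

theory Defs
  imports Complex_Main
begin

definition R1 :: "(real \<times> real) set" where
  "R1 = {(th, a). 0 \<le> th \<and> th \<le> pi/2 \<and> th - pi/2 \<le> a \<and> a \<le> th + pi/2}"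

end

theory Submission
  imports Defs "HOL-Analysis.Analysis"
begin

lemma gron:
  fixes h h' :: "real \<Rightarrow> real"
  assumes der: "\<And>u. (h has_real_derivative h' u) (at u)"
    and bnd: "\<And>u. u \<ge> s0 \<Longrightarrow> h' u \<ge> - K * \<bar>h u\<bar>"
    and K: "K \<ge> 0" and h0: "h s0 \<ge> 0" and ss: "s \<ge> s0"
  shows "h s \<ge> 0"
proof (rule ccontr)
  assume neg: "\<not> h s \<ge> 0"
  have cont: "continuous_on UNIV h"
    using der by (meson DERIV_continuous continuous_at_imp_continuous_on)
  define S where "S = {s0..s} \<inter> {u. 0 \<le> h u}"
  have cl: "closed S" unfolding S_def
    by (intro closed_Int closed_atLeastAtMost closed_Collect_le continuous_on_const cont)
  have ne: "S \<noteq> {}" using h0 ss unfolding S_def by auto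
  have bd: "bdd_above S" unfolding S_def by auto
  define t where "t = Sup S"
  have tS: "t \<in> S" using closed_contains_Sup[OF ne bd cl] t_def by simp
  have ht: "h t \<ge> 0" "s0 \<le> t" "t \<le> s" using tS S_def by auto
  have ts: "t < s" using ht neg by (cases "t = s") auto
  have hneg: "h u < 0" if "t < u" "u \<le> s" for u
  proof (rule ccontr)
    assume "\<not> h u < 0"
    then have "u \<in> S" using that ht unfolding S_def by auto
    then have "u \<le> t" unfolding t_def using bd by (simp add: cSup_upper)
    then show False using that by simp
  qed
  define F where "F u = h u * exp (- K * u)" for u
  have dF: "DERIV F x :> (h' x * exp (- K * x) + h x * (exp (- K * x) * (- K)))" for x
    unfolding F_def
    by (auto intro!: derivative_eq_intros der)
  obtain z where z: "t < z" "z < s" "F s - F t = (s - t) * (h' z * exp (- K * z) + h z * (exp (- K * z) * (- K)))"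
    using MVT2[OF ts, of F "\<lambda>x. h' x * exp (- K * x) + h x * (exp (- K * x) * (- K))"] dF by blast
  have hz: "h z < 0" using hneg z by simp
  have "h' z \<ge> - K * \<bar>h z\<bar>" using bnd z ht by simp
  then have "h' z + h z * (- K) \<ge> 0" using hz by (simp add: mult.commute)
  then have "h' z * exp (- K * z) + h z * (exp (- K * z) * (- K)) \<ge> 0"
    by (metis (no_types, opaque_lifting) distrib_right exp_gt_zero less_eq_real_def mult.assoc mult.commute zero_le_mult_iff)
  then have "F s - F t \<ge> 0" using z ts by simp
  moreover have "F t \<ge> 0" using ht unfolding F_def by simp
  moreover have "F s < 0" using neg unfolding F_def by (simp add: mult_neg_pos)
  ultimately show False by simp
qed

lemma abs3: fixes x y z :: real
  assumes "\<bar>y\<bar> \<le> 1" "\<bar>z\<bar> \<le> 1"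
  shows "x * y * z \<ge> - \<bar>x\<bar>"
proof -
  have "\<bar>x * y * z\<bar> \<le> \<bar>x\<bar>"
  proof -
    have "\<bar>y\<bar> * \<bar>z\<bar> \<le> 1" using assms by (intro mult_le_one) auto
    then have "\<bar>x\<bar> * (\<bar>y\<bar> * \<bar>z\<bar>) \<le> \<bar>x\<bar>" by (intro mult_left_le) auto
    then show ?thesis by (simp add: abs_mult mult.assoc)
  qed
  then show ?thesis by linarith
qed

lemma sc1: "sin (x::real) * sin x + cos x * cos x = 1" "sin x * sin x \<ge> 0" "cos x * cos x \<ge> 0"
  using sin_cos_squared_add[of x] by (simp_all add: power2_eq_square)
lemma cc1: "\<bar>cos (x::real) * cos x\<bar> \<le> 1"
proof -
  have "cos x * cos x \<le> 1" using sc1[of x] by linarith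
  then show ?thesis by (simp add: abs_mult)
qed
lemma ss1: "\<bar>- sin (x::real) * sin x\<bar> \<le> 1"
proof -
  have "sin x * sin x \<le> 1" using sc1[of x] by linarith
  then show ?thesis by (simp add: abs_mult)
qed

lemma beta_ineq:
  fixes t b p q :: real
  assumes p: "p \<ge> 0" and q: "q \<ge> 0" and st: "sin t \<ge> 0" and ct: "cos t \<ge> 0"
  shows "- sin b * ((q * cos (t + b) * cos t - p * sin (t + b) * sin t) - 3 * sin t * cos t * sin b)
         \<ge> - (p + q) * \<bar>cos b\<bar>"
proof -
  have E: "- sin b * ((q * cos (t + b) * cos t - p * sin (t + b) * sin t) - 3 * sin t * cos t * sin b)
     = (- sin b * (q * (cos t)^2 - p * (sin t)^2)) * cos b + (p + q + 3) * (sin t * cos t) * (sin b)^2"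
    by (simp add: cos_add sin_add algebra_simps power2_eq_square)
  have A: "(p + q + 3) * (sin t * cos t) * (sin b)^2 \<ge> 0"
    using p q st ct by simp
  have c2: "(cos t)^2 \<le> 1" "(sin t)^2 \<le> 1" by (simp_all add: abs_square_le_1)
  have "\<bar>q * (cos t)^2 - p * (sin t)^2\<bar> \<le> q * (cos t)^2 + p * (sin t)^2" using p q by (auto simp: abs_le_iff)
  also have "\<dots> \<le> q + p" using c2 p q by (meson add_mono mult_left_le)
  finally have X: "\<bar>q * (cos t)^2 - p * (sin t)^2\<bar> \<le> q + p" .
  have "\<bar>sin b\<bar> * \<bar>q * (cos t)^2 - p * (sin t)^2\<bar> \<le> 1 * (q + p)"
    by (rule mult_mono) (use X p q in \<open>auto simp: abs_sin_le_one\<close>)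
  then have B: "\<bar>- sin b * (q * (cos t)^2 - p * (sin t)^2)\<bar> \<le> p + q"
    by (simp add: abs_mult)
  have "\<bar>(- sin b * (q * (cos t)^2 - p * (sin t)^2)) * cos b\<bar> \<le> (p + q) * \<bar>cos b\<bar>"
    using B by (simp add: abs_mult mult_right_mono)
  then show ?thesis using E A by linarith
qed

theorem lemma4p7:
  fixes p q :: nat and theta alpha :: "real \<Rightarrow> real" and s0 :: real
  assumes "p \<ge> 1" and "q \<ge> 1"
    and "\<And>s. (theta has_real_derivative
              (3 * sin (theta s) * cos (theta s) * sin (alpha s - theta s))) (at s)"
    and "\<And>s. (alpha has_real_derivative
              (real q * cos (alpha s) * cos (theta s) - real p * sin (alpha s) * sin (theta s))) (at s)"
    and "0 < theta s0" and "theta s0 < pi/2"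
    and "theta s0 - pi/2 \<le> alpha s0" and "alpha s0 \<le> theta s0 + pi/2"
  shows "\<forall>s\<ge>s0. (theta s, alpha s) \<in> R1"
proof (intro allI impI)
  fix s assume ss: "s \<ge> s0"
  note dth = assms(3) and dal = assms(4)
  have cth: "continuous_on A theta" for A
    using dth by (meson DERIV_continuous continuous_at_imp_continuous_on)
  have cal: "continuous_on A alpha" for A
    using dal by (meson DERIV_continuous continuous_at_imp_continuous_on)
  have sinpos: "sin (theta u) \<ge> 0" if "u \<ge> s0" for u
  proof (rule gron[of "\<lambda>u. sin (theta u)" _ s0 3 u])
    fix x show "((\<lambda>u. sin (theta u)) has_real_derivative
       cos (theta x) * (3 * sin (theta x) * cos (theta x) * sin (alpha x - theta x))) (at x)"
      by (auto intro!: derivative_eq_intros dth)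
  next
    fix x
    have "cos (theta x) * (3 * sin (theta x) * cos (theta x) * sin (alpha x - theta x))
       = (3 * sin (theta x)) * (cos (theta x) * cos (theta x)) * sin (alpha x - theta x)" by simp
    also have "\<dots> \<ge> - \<bar>3 * sin (theta x)\<bar>"
      by (rule abs3) (simp_all only: cc1 ss1 abs_sin_le_one)
    finally show "cos (theta x) * (3 * sin (theta x) * cos (theta x) * sin (alpha x - theta x))
        \<ge> - 3 * \<bar>sin (theta x)\<bar>" by (simp add: abs_mult)
  qed (use assms(5,6) that in \<open>auto intro!: sin_ge_zero\<close>)
  have cospos: "cos (theta u) \<ge> 0" if "u \<ge> s0" for u
  proof (rule gron[of "\<lambda>u. cos (theta u)" _ s0 3 u])
    fix x show "((\<lambda>u. cos (theta u)) has_real_derivative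
       - sin (theta x) * (3 * sin (theta x) * cos (theta x) * sin (alpha x - theta x))) (at x)"
      by (auto intro!: derivative_eq_intros dth)
  next
    fix x
    have "- sin (theta x) * (3 * sin (theta x) * cos (theta x) * sin (alpha x - theta x))
       = (3 * cos (theta x)) * (- sin (theta x) * sin (theta x)) * sin (alpha x - theta x)" by simp
    also have "\<dots> \<ge> - \<bar>3 * cos (theta x)\<bar>"
      by (rule abs3) (simp_all only: cc1 ss1 abs_sin_le_one)
    finally show "- sin (theta x) * (3 * sin (theta x) * cos (theta x) * sin (alpha x - theta x))
        \<ge> - 3 * \<bar>cos (theta x)\<bar>" by (simp add: abs_mult)
  qed (use assms(5,6) that in \<open>auto intro!: cos_ge_zero\<close>)
  have th1: "theta s \<ge> 0"
  proof (rule ccontr)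
    assume "\<not> theta s \<ge> 0"
    then obtain x where x: "s0 \<le> x" "x \<le> s" "theta x = max (theta s) (- pi/4)"
      using IVT2'[of theta s "max (theta s) (- pi/4)" s0] ss assms(5) cth pi_gt3 by auto
    have "sin (theta x) < 0" using x \<open>\<not> theta s \<ge> 0\<close> pi_gt3
      by (intro sin_less_zero) auto
    then show False using sinpos[OF x(1)] by simp
  qed
  have th2: "theta s \<le> pi/2"
  proof (rule ccontr)
    assume "\<not> theta s \<le> pi/2"
    then obtain x where x: "s0 \<le> x" "x \<le> s" "theta x = min (theta s) (3*pi/4)"
      using IVT'[of theta s0 "min (theta s) (3*pi/4)" s] ss assms(6) cth pi_gt3 by auto
    have "sin (pi/2 - theta x) < 0" using x \<open>\<not> theta s \<le> pi/2\<close> pi_gt3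
      by (intro sin_less_zero) auto
    then show False using cospos[OF x(1)] by (simp add: cos_sin_eq)
  qed
  define be where "be u = alpha u - theta u" for u
  have cbe: "continuous_on A be" for A
    unfolding be_def by (intro continuous_on_diff cal cth)
  have cbpos: "cos (be u) \<ge> 0" if "u \<ge> s0" for u
  proof (rule gron[of "\<lambda>u. cos (be u)" _ s0 "real p + real q" u])
    fix x show "((\<lambda>u. cos (be u)) has_real_derivative
       - sin (be x) * ((real q * cos (alpha x) * cos (theta x) - real p * sin (alpha x) * sin (theta x))
          - 3 * sin (theta x) * cos (theta x) * sin (alpha x - theta x))) (at x)"
      unfolding be_def by (auto intro!: derivative_eq_intros dth dal)
  next
    fix x assume x: "x \<ge> s0"
    have al: "alpha x = theta x + be x" unfolding be_def by simp
    show "- sin (be x) * ((real q * cos (alpha x) * cos (theta x) - real p * sin (alpha x) * sin (theta x))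
          - 3 * sin (theta x) * cos (theta x) * sin (alpha x - theta x)) \<ge> - (real p + real q) * \<bar>cos (be x)\<bar>"
      unfolding al using beta_ineq[of "real p" "real q" "theta x" "be x"] sinpos[OF x] cospos[OF x]
      by simp
  qed (use assms(7,8) that in \<open>auto simp: be_def intro!: cos_ge_zero\<close>)
  have b1: "be s \<le> pi/2"
  proof (rule ccontr)
    assume n: "\<not> be s \<le> pi/2"
    then obtain x where x: "s0 \<le> x" "x \<le> s" "be x = min (be s) (3*pi/4)"
      using IVT'[of be s0 "min (be s) (3*pi/4)" s] ss assms(8) cbe pi_gt3 by (auto simp: be_def)
    have "sin (pi/2 - be x) < 0" using x n pi_gt3
      by (intro sin_less_zero) auto
    then show False using cbpos[OF x(1)] by (simp add: cos_sin_eq)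
  qed
  have b2: "be s \<ge> - pi/2"
  proof (rule ccontr)
    assume n: "\<not> be s \<ge> - pi/2"
    then obtain x where x: "s0 \<le> x" "x \<le> s" "be x = max (be s) (- 3*pi/4)"
      using IVT2'[of be s "max (be s) (- 3*pi/4)" s0] ss assms(7) cbe pi_gt3 by (auto simp: be_def)
    have "sin (pi/2 + be x) < 0" using x n pi_gt3
      by (intro sin_less_zero) auto
    moreover have "cos (be x) = sin (pi/2 + be x)" by (simp add: sin_add)
    ultimately show False using cbpos[OF x(1)] by simp
  qed
  show "(theta s, alpha s) \<in> R1"
    using th1 th2 b1 b2 unfolding R1_def be_def by auto
qed

end
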